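(* Every centrally essential ring that is right semi-Artinian, and every centrally essential ring that is semiperfect, is right quasi-invariant.
   Context: All rings are associative, unital and non-zero. $Z(A)$ denotes the center of a ring $A$. A ring $A$ is centrally essential if either $A$ is commutative or for every non-central element $a\in A$ there exist non-zero central elements $x,y\in Z(A)$ with $ax=y$. A ring is right quasi-invariant if every maximal right ideal of it is a two-sided ideal. *)

theory Defs
  imports Main
begin

text \<open>Rings are modelled by the type class ring_1 (associative, unital, possibly
non-commutative; zero_neq_one gives that the ring is non-zero).
A ring-theoretic property of the ring is a predicate on the type, passed via itself.\<close>

definition center :: "'a::ring_1 itself \<Rightarrow> 'a set" where
  "center _ = {z. \<forall>a::'a. z * a = a * z}"

definition centrally_essential :: "'a::ring_1 itself \<Rightarrow> bool" where
  "centrally_essential T \<longleftrightarrow>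
     (\<forall>a b::'a. a * b = b * a) \<or>
     (\<forall>a::'a. a \<notin> center T \<longrightarrow>
        (\<exists>x\<in>center T. \<exists>y\<in>center T. x \<noteq> 0 \<and> y \<noteq> 0 \<and> a * x = y))"

definition right_ideal :: "'a::ring_1 set \<Rightarrow> bool" where
  "right_ideal I \<longleftrightarrow> 0 \<in> I \<and> (\<forall>x\<in>I. \<forall>y\<in>I. x + y \<in> I) \<and> (\<forall>x\<in>I. - x \<in> I)
     \<and> (\<forall>x\<in>I. \<forall>r. x * r \<in> I)"

definition left_ideal :: "'a::ring_1 set \<Rightarrow> bool" where
  "left_ideal I \<longleftrightarrow> 0 \<in> I \<and> (\<forall>x\<in>I. \<forall>y\<in>I. x + y \<in> I) \<and> (\<forall>x\<in>I. - x \<in> I)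
     \<and> (\<forall>x\<in>I. \<forall>r. r * x \<in> I)"

definition two_sided_ideal :: "'a::ring_1 set \<Rightarrow> bool" where
  "two_sided_ideal I \<longleftrightarrow> right_ideal I \<and> left_ideal I"

definition maximal_right_ideal :: "'a::ring_1 set \<Rightarrow> bool" where
  "maximal_right_ideal M \<longleftrightarrow> right_ideal M \<and> M \<noteq> UNIV \<and>
     (\<forall>I. right_ideal I \<and> M \<subseteq> I \<and> I \<noteq> UNIV \<longrightarrow> I = M)"

definition right_quasi_invariant :: "'a::ring_1 itself \<Rightarrow> bool" where
  "right_quasi_invariant _ \<longleftrightarrow> (\<forall>M::'a set. maximal_right_ideal M \<longrightarrow> two_sided_ideal M)"

text \<open>Right semi-Artinian: the module A_A is semi-Artinian, i.e. every non-zero factor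
module A/I (I a proper right ideal) has a simple submodule J/I, i.e. a right ideal
J strictly containing I with no right ideal strictly between I and J.\<close>

definition right_semi_artinian :: "'a::ring_1 itself \<Rightarrow> bool" where
  "right_semi_artinian _ \<longleftrightarrow>
     (\<forall>I::'a set. right_ideal I \<and> I \<noteq> UNIV \<longrightarrow>
        (\<exists>J. right_ideal J \<and> I \<subset> J \<and>
             (\<forall>K. right_ideal K \<and> I \<subseteq> K \<and> K \<subseteq> J \<longrightarrow> K = I \<or> K = J)))"

definition jacobson_radical :: "'a::ring_1 itself \<Rightarrow> 'a set" where
  "jacobson_radical _ = \<Inter>{M::'a set. maximal_right_ideal M}"

text \<open>Semiperfect (Lam): A/J(A) is semisimple and idempotents lift modulo J(A).
A/J semisimple: every right ideal of A/J is a direct summand; right ideals of A/J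
correspond to right ideals of A containing J.\<close>

definition semiperfect :: "'a::ring_1 itself \<Rightarrow> bool" where
  "semiperfect T \<longleftrightarrow>
     (let J = jacobson_radical T in
       (\<forall>I::'a set. right_ideal I \<and> J \<subseteq> I \<longrightarrow>
          (\<exists>K. right_ideal K \<and> J \<subseteq> K \<and> I \<inter> K = J \<and> {x + y |x y. x \<in> I \<and> y \<in> K} = UNIV))
       \<and> (\<forall>a::'a. a * a - a \<in> J \<longrightarrow> (\<exists>e. e * e = e \<and> e - a \<in> J)))"

end

theory Submission
  imports Defs
begin


lemma ri_zero: "right_ideal I \<Longrightarrow> 0 \<in> I" by (simp add: right_ideal_def)
lemma ri_add: "right_ideal I \<Longrightarrow> x \<in> I \<Longrightarrow> y \<in> I \<Longrightarrow> x + y \<in> I" by (simp add: right_ideal_def)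
lemma ri_neg: "right_ideal I \<Longrightarrow> x \<in> I \<Longrightarrow> - x \<in> I" by (simp add: right_ideal_def)
lemma ri_mult: "right_ideal I \<Longrightarrow> x \<in> I \<Longrightarrow> x * r \<in> I" by (simp add: right_ideal_def)
lemma ri_diff: "right_ideal I \<Longrightarrow> x \<in> I \<Longrightarrow> y \<in> I \<Longrightarrow> x - y \<in> I"
  using ri_add ri_neg by (metis diff_conv_add_uminus)
lemma ri_UNIV: "right_ideal (UNIV::'a::ring_1 set)" by (simp add: right_ideal_def)
lemma ri_one: "right_ideal I \<Longrightarrow> (1::'a::ring_1) \<in> I \<Longrightarrow> I = UNIV"
  using ri_mult[of I 1] by auto

lemma ri_sum: assumes "right_ideal K" "right_ideal I"
  shows "right_ideal {k + u*a |k a. k \<in> K \<and> a \<in> I}"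
  unfolding right_ideal_def
proof (intro conjI ballI allI)
  show "0 \<in> {k + u*a |k a. k \<in> K \<and> a \<in> I}" using assms ri_zero by force
next
  fix x y assume "x \<in> {k + u*a |k a. k \<in> K \<and> a \<in> I}" "y \<in> {k + u*a |k a. k \<in> K \<and> a \<in> I}"
  then obtain k1 a1 k2 a2 where "x = k1 + u*a1" "y = k2 + u*a2" "k1 \<in> K" "a1 \<in> I" "k2 \<in> K" "a2 \<in> I" by blast
  then show "x + y \<in> {k + u*a |k a. k \<in> K \<and> a \<in> I}"
    using assms ri_add[of K k1 k2] ri_add[of I a1 a2]
    by (intro CollectI exI[of _ "k1+k2"] exI[of _ "a1+a2"]) (simp add: algebra_simps)
next
  fix x assume "x \<in> {k + u*a |k a. k \<in> K \<and> a \<in> I}"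
  then obtain k1 a1 where "x = k1 + u*a1" "k1 \<in> K" "a1 \<in> I" by blast
  then show "- x \<in> {k + u*a |k a. k \<in> K \<and> a \<in> I}"
    using assms ri_neg[of K k1] ri_neg[of I a1]
    by (intro CollectI exI[of _ "-k1"] exI[of _ "-a1"]) (simp add: algebra_simps)
next
  fix x r assume "x \<in> {k + u*a |k a. k \<in> K \<and> a \<in> I}"
  then obtain k1 a1 where "x = k1 + u*a1" "k1 \<in> K" "a1 \<in> I" by blast
  then show "x * r \<in> {k + u*a |k a. k \<in> K \<and> a \<in> I}"
    using assms ri_mult[of K k1 r] ri_mult[of I a1 r]
    by (intro CollectI exI[of _ "k1*r"] exI[of _ "a1*r"]) (simp add: algebra_simps)
qed

lemma ri_colon: assumes "right_ideal K" shows "right_ideal {a. u*a \<in> K}"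
  using assms unfolding right_ideal_def by (simp add: distrib_left mult.assoc[symmetric])

definition minover :: "'a::ring_1 set \<Rightarrow> 'a set \<Rightarrow> bool" where
  "minover K L \<longleftrightarrow> right_ideal L \<and> K \<subset> L \<and> (\<forall>X. right_ideal X \<and> K \<subseteq> X \<and> X \<subseteq> L \<longrightarrow> X = K \<or> X = L)"

lemma sa_minover: "right_semi_artinian TYPE('a::ring_1) \<Longrightarrow> right_ideal (I::'a set) \<Longrightarrow> I \<noteq> UNIV \<Longrightarrow> \<exists>L. minover I L"
  unfolding right_semi_artinian_def minover_def by blast

lemma max_minover: "maximal_right_ideal M \<Longrightarrow> minover M UNIV"
  unfolding maximal_right_ideal_def minover_def using ri_UNIV by blast

lemma colon_max:
  assumes K: "right_ideal K" and mo: "minover K L" and u: "u \<in> L" "u \<notin> K"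
  shows "maximal_right_ideal {a. u*a \<in> K}"
  unfolding maximal_right_ideal_def
proof (intro conjI allI impI)
  show "right_ideal {a. u*a \<in> K}" by (rule ri_colon[OF K])
  show "{a. u * a \<in> K} \<noteq> UNIV"
  proof
    assume "{a. u * a \<in> K} = UNIV"
    then have "u * 1 \<in> K" by blast
    then show False using u by simp
  qed
  fix I assume I: "right_ideal I \<and> {a. u * a \<in> K} \<subseteq> I \<and> I \<noteq> UNIV"
  show "I = {a. u * a \<in> K}"
  proof (rule ccontr)
    assume "I \<noteq> {a. u * a \<in> K}"
    then obtain x where x: "x \<in> I" "u*x \<notin> K" using I by blast
    let ?X = "{k + u*a |k a. k \<in> K \<and> a \<in> I}"
    have X: "right_ideal ?X" using ri_sum[OF K] I by blast
    have "K \<subseteq> ?X" using I ri_zero[of I] by force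
    moreover have "?X \<subseteq> L"
    proof
      fix y assume "y \<in> ?X"
      then obtain k a where "y = k + u*a" "k \<in> K" by blast
      moreover have "u*a \<in> L" using mo u ri_mult unfolding minover_def by blast
      ultimately show "y \<in> L" using mo ri_add unfolding minover_def by blast
    qed
    moreover have "?X \<noteq> K"
    proof
      assume "?X = K"
      moreover have "0 + u*x \<in> ?X" using x K ri_zero by blast
      ultimately show False using x by simp
    qed
    ultimately have "?X = L" using mo X unfolding minover_def by blast
    then have "u \<in> ?X" using u by simp
    then obtain k a where ka: "u = k + u*a" "k \<in> K" "a \<in> I" by blast
    then have "u*(1-a) = k" by (simp add: algebra_simps)
    then have "u*(1-a) \<in> K" using ka by simp
    then have "1 - a \<in> I" using I by blast
    then have "1 \<in> I" using ri_add[of I "1-a" a] I ka by simp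
    then show False using I ri_one by blast
  qed
qed

lemma max_ext: assumes "maximal_right_ideal M" "x \<notin> M"
  shows "\<exists>m\<in>M. \<exists>r. m + x*r = 1"
proof -
  have M: "right_ideal M" "M \<noteq> UNIV" using assms unfolding maximal_right_ideal_def by auto
  let ?X = "{k + x*a |k a. k \<in> M \<and> a \<in> (UNIV::'a set)}"
  have X: "right_ideal ?X" by (rule ri_sum[OF M(1) ri_UNIV])
  have "M \<subseteq> ?X"
  proof
    fix m assume "m \<in> M" then show "m \<in> ?X" by (intro CollectI exI[of _ m] exI[of _ 0]) simp
  qed
  moreover have "x \<in> ?X" using M(1) ri_zero by (intro CollectI exI[of _ 0] exI[of _ 1]) simp
  ultimately have "?X = UNIV" using assms X unfolding maximal_right_ideal_def by blast
  then have "1 \<in> ?X" by simp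
  then show ?thesis by force
qed



lemma max_ri: "maximal_right_ideal M \<Longrightarrow> right_ideal M" by (simp add: maximal_right_ideal_def)
lemma max_ne: "maximal_right_ideal M \<Longrightarrow> (1::'a::ring_1) \<notin> M"
  using ri_one by (auto simp: maximal_right_ideal_def)

lemma J_memD: "x \<in> jacobson_radical TYPE('a::ring_1) \<Longrightarrow> maximal_right_ideal (M::'a set) \<Longrightarrow> x \<in> M"
  unfolding jacobson_radical_def by blast
lemma J_mem: "(\<And>M. maximal_right_ideal (M::'a::ring_1 set) \<Longrightarrow> x \<in> M) \<Longrightarrow> x \<in> jacobson_radical TYPE('a)"
  unfolding jacobson_radical_def by blast

lemma J_ri: "right_ideal (jacobson_radical TYPE('a::ring_1))"
  unfolding right_ideal_def
  by (intro conjI ballI allI J_mem; meson J_memD max_ri ri_zero ri_add ri_neg ri_mult)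

lemma J_left: assumes "x \<in> jacobson_radical TYPE('a::ring_1)" shows "r * x \<in> jacobson_radical TYPE('a)"
proof (rule J_mem)
  fix M :: "'a set" assume M: "maximal_right_ideal M"
  show "r * x \<in> M"
  proof (cases "r \<in> M")
    case True then show ?thesis using M max_ri ri_mult by blast
  next
    case False
    have "maximal_right_ideal {a. r*a \<in> M}"
      by (rule colon_max[OF max_ri[OF M] max_minover[OF M]]) (use False in auto)
    then show ?thesis using J_memD[OF assms] by blast
  qed
qed

lemma J_add: "x \<in> jacobson_radical TYPE('a::ring_1) \<Longrightarrow> y \<in> jacobson_radical TYPE('a) \<Longrightarrow> x + y \<in> jacobson_radical TYPE('a)"
  using J_ri ri_add by blast
lemma J_diff: "x \<in> jacobson_radical TYPE('a::ring_1) \<Longrightarrow> y \<in> jacobson_radical TYPE('a) \<Longrightarrow> x - y \<in> jacobson_radical TYPE('a)"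
  using J_ri ri_diff by blast
lemma J_neg: "x \<in> jacobson_radical TYPE('a::ring_1) \<Longrightarrow> - x \<in> jacobson_radical TYPE('a)"
  using J_ri ri_neg by blast
lemma J_mult: "x \<in> jacobson_radical TYPE('a::ring_1) \<Longrightarrow> x * r \<in> jacobson_radical TYPE('a)"
  using J_ri ri_mult by blast
lemma J_zero: "0 \<in> jacobson_radical TYPE('a::ring_1)"
  using J_ri ri_zero by blast

lemma ce_kill:
  assumes ce: "centrally_essential TYPE('a::ring_1)"
    and f: "f * f = (f::'a)" and t1: "t * f = 0" and t2: "f * t = t"
  shows "t = 0"
proof -
  have C: "\<And>z. z \<in> center TYPE('a) \<Longrightarrow> z * a = a * z" for a by (simp add: center_def)
  show ?thesis
  proof (cases "\<forall>a b::'a. a * b = b * a")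
    case True then show ?thesis using t1 t2 by metis
  next
    case False
    show ?thesis
    proof (cases "t \<in> center TYPE('a)")
      case True then show ?thesis using t1 t2 C by metis
    next
      case nc: False
      then obtain x y where xy: "x \<in> center TYPE('a)" "y \<in> center TYPE('a)" "y \<noteq> 0" "t * x = y"
        using ce False unfolding centrally_essential_def by blast
      have "y * f = t * (x * f)" using xy(4)[symmetric] by (simp add: mult.assoc)
      also have "\<dots> = t * (f * x)" using C[OF xy(1)] by simp
      also have "\<dots> = 0" using t1 by (simp add: mult.assoc[symmetric])
      finally have y1: "y * f = 0" .
      have "f * y = (f * t) * x" using xy(4)[symmetric] by (simp add: mult.assoc)
      then have "f * y = y" using t2 xy by simp
      then have "y = 0" using y1 C[OF xy(2), of f] by simp
      then show ?thesis using xy by simp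
    qed
  qed
qed

lemma idem_central:
  assumes ce: "centrally_essential TYPE('a::ring_1)" and f: "f * f = (f::'a)"
  shows "f * a = a * f"
proof -
  have ff: "f * (f * x) = f * x" for x using f by (simp add: mult.assoc[symmetric])
  have 1: "f * a * (1 - f) = 0"
    by (rule ce_kill[OF ce f]) (simp_all add: algebra_simps f ff)
  have f': "(1-f)*(1-f) = 1 - f" using f by (simp add: algebra_simps)
  have 2: "(1 - f) * a * f = 0"
    by (rule ce_kill[OF ce f']) (simp_all add: algebra_simps f ff)
  from 1 have "f * a = f * a * f" by (simp add: algebra_simps f)
  moreover from 2 have "a * f = f * a * f" by (simp add: algebra_simps f ff)
  ultimately show ?thesis by simp
qed



lemma left_from_mult: "right_ideal M \<Longrightarrow> (\<And>r x. x \<in> M \<Longrightarrow> r * x \<in> M) \<Longrightarrow> two_sided_ideal M"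
  unfolding two_sided_ideal_def left_ideal_def right_ideal_def by blast

lemma semiperfect_case:
  assumes ce: "centrally_essential TYPE('a::ring_1)" and sp: "semiperfect TYPE('a)"
    and M: "maximal_right_ideal (M::'a set)"
  shows "two_sided_ideal M"
proof -
  let ?J = "jacobson_radical TYPE('a)"
  have JM: "?J \<subseteq> M" using J_memD M by blast
  have Mri: "right_ideal M" using M max_ri by blast
  obtain K where K: "right_ideal K" "?J \<subseteq> K" "M \<inter> K = ?J" "{x + y |x y. x \<in> M \<and> y \<in> K} = UNIV"
    using sp Mri JM unfolding semiperfect_def Let_def by blast
  have "1 \<in> {x + y |x y. x \<in> M \<and> y \<in> K}" using K(4) by simp
  then obtain m k where mk: "m \<in> M" "k \<in> K" "1 = m + k" by blast
  have k1: "k = 1 - m" using mk(3) by (metis add_diff_cancel_left')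
  have "k * m \<in> K" using K(1) mk ri_mult by blast
  moreover have "k * m = m - m * m" using k1 by (simp add: left_diff_distrib)
  then have "k * m \<in> M" using ri_diff[OF Mri mk(1) ri_mult[OF Mri mk(1)]] by simp
  ultimately have kmJ: "k * m \<in> ?J" using K(3) by blast
  have "k * k - k = - (k * m)"
  proof -
    have "k - 1 = - m" using k1 by simp
    then have "k * (k - 1) = - (k * m)" by simp
    then show ?thesis by (simp add: algebra_simps)
  qed
  then have "k * k - k \<in> ?J" using kmJ J_neg by metis
  then obtain e where e: "e * e = e" "e - k \<in> ?J" using sp unfolding semiperfect_def Let_def by blast
  have eK: "e \<in> K" using ri_add[OF K(1), of k "e - k"] e K mk by auto
  have "1 - e = m + (- (e - k))" using k1 by (simp add: algebra_simps)
  moreover have "- (e - k) \<in> M" using J_neg[OF e(2)] JM by blast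
  ultimately have eM: "1 - e \<in> M" using ri_add[OF Mri mk(1)] by metis
  have cen: "\<And>a. e * a = a * e" using idem_central[OF ce e(1)] by blast
  show ?thesis
  proof (rule left_from_mult[OF Mri])
    fix r x assume x: "x \<in> M"
    have 1: "r * x * (1 - e) \<in> M"
    proof -
      have "r * x * (1 - e) = r * x - r * x * e" by (simp add: algebra_simps)
      also have "\<dots> = r * x - e * (r * x)" using cen[of "r*x"] by simp
      also have "\<dots> = (1 - e) * (r * x)" by (simp add: algebra_simps)
      finally have "r * x * (1 - e) = (1 - e) * (r * x)" .
      then show ?thesis using ri_mult[OF Mri eM] by simp
    qed
    have "e * x \<in> K" using ri_mult[OF K(1) eK] by blast
    moreover have "e * x \<in> M" using cen ri_mult[OF Mri x] by metis
    ultimately have "e * x \<in> ?J" using K(3) by blast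
    then have "r * (e * x) \<in> M" using J_left JM by blast
    then have 2: "r * x * e \<in> M" using cen by (metis mult.assoc)
    have "r * x = r * x * e + r * x * (1 - e)" by (simp add: algebra_simps)
    then show "r * x \<in> M" using ri_add[OF Mri 2 1] by simp
  qed
qed



fun pr :: "(nat \<Rightarrow> 'a::ring_1) \<Rightarrow> nat \<Rightarrow> 'a" where
  "pr f 0 = 1" | "pr f (Suc n) = pr f n * f n"

lemma pr_shift: "pr f (Suc n) = f 0 * pr (\<lambda>i. f (Suc i)) n"
  by (induction n) (simp_all add: mult.assoc)

lemma pr_mono: "b * pr f n = 0 \<Longrightarrow> n \<le> m \<Longrightarrow> b * pr f m = 0"
proof (induction m)
  case 0 then show ?case by simp
next
  case (Suc m)
  show ?case
  proof (cases "n = Suc m")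
    case True then show ?thesis using Suc by simp
  next
    case False
    then have "b * pr f m = 0" using Suc by simp
    then show ?thesis by (simp add: mult.assoc[symmetric])
  qed
qed

lemma pr_const: "pr (\<lambda>_. j) n = j ^ n" by (induction n) (simp_all add: power_commutes)

lemma J_nil:
  assumes sa: "right_semi_artinian TYPE('a::ring_1)" and j: "j \<in> jacobson_radical TYPE('a)"
  shows "\<exists>n. j ^ n = 0"
proof -
  let ?J = "jacobson_radical TYPE('a)"
  define K where "K = {b::'a. \<forall>f::nat\<Rightarrow>'a. (\<forall>i. f i \<in> ?J) \<longrightarrow> (\<exists>n. b * pr f n = 0)}"
  have Kri: "right_ideal K"
    unfolding right_ideal_def
  proof (intro conjI ballI allI)
    show "0 \<in> K" unfolding K_def by simp
  next
    fix x y assume xy: "x \<in> K" "y \<in> K"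
    show "x + y \<in> K" unfolding K_def
    proof (intro CollectI allI impI)
      fix f :: "nat \<Rightarrow> 'a" assume f: "\<forall>i. f i \<in> ?J"
      obtain n1 where n1: "x * pr f n1 = 0" using xy(1) f unfolding K_def by blast
      obtain n2 where n2: "y * pr f n2 = 0" using xy(2) f unfolding K_def by blast
      have "x * pr f (max n1 n2) = 0" using pr_mono[OF n1] by simp
      moreover have "y * pr f (max n1 n2) = 0" using pr_mono[OF n2] by simp
      ultimately show "\<exists>n. (x + y) * pr f n = 0" by (intro exI[of _ "max n1 n2"]) (simp add: distrib_right)
    qed
  next
    fix x assume x: "x \<in> K"
    show "- x \<in> K" unfolding K_def
    proof (intro CollectI allI impI)
      fix f :: "nat \<Rightarrow> 'a" assume f: "\<forall>i. f i \<in> ?J"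
      obtain n1 where n1: "x * pr f n1 = 0" using x f unfolding K_def by blast
      then show "\<exists>n. (- x) * pr f n = 0" by (intro exI[of _ n1]) simp
    qed
  next
    fix x r assume x: "x \<in> K"
    show "x * r \<in> K" unfolding K_def
    proof (intro CollectI allI impI)
      fix f :: "nat \<Rightarrow> 'a" assume f: "\<forall>i. f i \<in> ?J"
      define g where "g = (\<lambda>i. if i = 0 then r * f 0 else f i)"
      have g: "\<forall>i. g i \<in> ?J" using f J_left unfolding g_def by auto
      obtain n where n: "x * pr g n = 0" using x g unfolding K_def by blast
      have "x * pr g (Suc n) = 0" using pr_mono[OF n, of "Suc n"] by simp
      moreover have "pr g (Suc n) = r * f 0 * pr (\<lambda>i. f (Suc i)) n"
      proof -
        have "pr g (Suc n) = g 0 * pr (\<lambda>i. g (Suc i)) n" by (rule pr_shift)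
        also have "\<dots> = r * f 0 * pr (\<lambda>i. f (Suc i)) n" by (simp add: g_def)
        finally show ?thesis .
      qed
      ultimately have "x * (r * f 0 * pr (\<lambda>i. f (Suc i)) n) = 0" by simp
      then have "x * r * pr f (Suc n) = 0" by (simp only: pr_shift[of f n] mult.assoc)
      then show "\<exists>n. x * r * pr f n = 0" by blast
    qed
  qed
  have "K = UNIV"
  proof (rule ccontr)
    assume "K \<noteq> UNIV"
    then obtain L where L: "minover K L" using sa_minover[OF sa Kri] by blast
    then obtain u where u: "u \<in> L" "u \<notin> K" unfolding minover_def by blast
    have mx: "maximal_right_ideal {a. u*a \<in> K}" by (rule colon_max[OF Kri L u])
    have uj: "u * y \<in> K" if "y \<in> ?J" for y using J_memD[OF that mx] by simp
    have "u \<in> K" unfolding K_def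
    proof (intro CollectI allI impI)
      fix f :: "nat \<Rightarrow> 'a" assume f: "\<forall>i. f i \<in> ?J"
      have "u * f 0 \<in> K" using uj f by blast
      moreover have "\<forall>i. (\<lambda>i. f (Suc i)) i \<in> ?J" using f by blast
      ultimately have "\<exists>n. u * f 0 * pr (\<lambda>i. f (Suc i)) n = 0"
        unfolding K_def mem_Collect_eq by (rule mp[OF spec[of _ "\<lambda>i. f (Suc i)"]])
      then obtain n where "u * f 0 * pr (\<lambda>i. f (Suc i)) n = 0" ..
      then have "u * pr f (Suc n) = 0" by (simp only: pr_shift[of f n] mult.assoc)
      then show "\<exists>n. u * pr f n = 0" by blast
    qed
    then show False using u by simp
  qed
  then have "1 \<in> K" by simp
  then have "\<exists>n. 1 * pr (\<lambda>_::nat. j) n = 0"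
    unfolding K_def mem_Collect_eq by (rule mp[OF spec[of _ "\<lambda>_. j"]]) (use j in blast)
  then obtain n where "1 * pr (\<lambda>_::nat. j) n = 0" ..
  then show ?thesis by (auto simp: pr_const)
qed



fun padd :: "int list \<Rightarrow> int list \<Rightarrow> int list" where
  "padd [] q = q" | "padd p [] = p" | "padd (a#p) (b#q) = (a+b) # padd p q"
fun pmul :: "int list \<Rightarrow> int list \<Rightarrow> int list" where
  "pmul [] q = []" | "pmul (a#p) q = padd (map (\<lambda>b. a*b) q) (0 # pmul p q)"
fun ev :: "int list \<Rightarrow> 'a::ring_1 \<Rightarrow> 'a" where
  "ev [] x = 0" | "ev (c#cs) x = of_int c + x * ev cs x"

lemma ev_padd: "ev (padd p q) x = ev p x + ev q x"
  by (induction p q rule: padd.induct) (simp_all add: algebra_simps)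
lemma ev_smult: "ev (map (\<lambda>b. a*b) q) x = of_int a * ev q x"
proof (induction q)
  case Nil then show ?case by simp
next
  case (Cons b q)
  have "ev (map (\<lambda>b. a*b) (b#q)) x = of_int a * of_int b + x * (of_int a * ev q x)" using Cons by simp
  also have "x * (of_int a * ev q x) = of_int a * (x * ev q x)"
    by (metis mult.assoc mult_of_int_commute)
  finally show ?case by (simp add: distrib_left)
qed
lemma ev_pmul: "ev (pmul p q) x = ev p x * ev q x"
  by (induction p) (simp_all add: ev_padd ev_smult distrib_right mult.assoc)

lemma ev_comm: "y * x = x * y \<Longrightarrow> ev p x * y = y * ev p x"
proof (induction p)
  case Nil then show ?case by simp
next
  case (Cons c cs)
  have "ev (c#cs) x * y = of_int c * y + x * (ev cs x * y)" by (simp add: distrib_right mult.assoc)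
  also have "\<dots> = y * of_int c + x * (y * ev cs x)" using Cons by (simp add: mult_of_int_commute)
  also have "\<dots> = y * of_int c + (y * x) * ev cs x" using Cons(2) by (simp add: mult.assoc)
  also have "\<dots> = y * ev (c#cs) x" by (simp add: distrib_left mult.assoc)
  finally show ?case .
qed

lemma ev_id: "ev [0,1] x = x" by simp
lemma ev_sq: "ev [0,-1,1] x = x * x - x" by (simp add: algebra_simps)

definition hh :: "'a::ring_1 \<Rightarrow> 'a" where "hh x = ev [0,0,3,-2] x"

lemma hh1: "hh x - x = ev [1,-2] x * ev [0,-1,1] x"
proof -
  have "hh x - x = ev (padd [0,0,3,-2] [0,-1]) x" unfolding hh_def ev_padd by simp
  also have "\<dots> = ev (pmul [1,-2] [0,-1,1]) x" by simp
  finally show ?thesis by (simp only: ev_pmul)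
qed

lemma hh2: "ev [0,-1,1] (hh x) = ev [0,-1,1] x * ev [0,-1,1] x * ev [-3,-4,4] x"
proof -
  have "ev [0,-1,1] (hh x) = hh x * hh x - hh x" by (simp only: ev_sq)
  also have "\<dots> = ev (padd (pmul [0,0,3,-2] [0,0,3,-2]) [0,0,-3,2]) x"
    unfolding hh_def ev_padd ev_pmul by (simp add: algebra_simps)
  also have "\<dots> = ev (pmul (pmul [0,-1,1] [0,-1,1]) [-3,-4,4]) x" by simp
  finally show ?thesis by (simp only: ev_pmul)
qed

lemma comm_mult: fixes a b e :: "'a::ring_1" assumes "a * e = e * a" "b * e = e * b" shows "(a * b) * e = e * (a * b)"
proof -
  have "(a * b) * e = a * (b * e)" by (simp only: mult.assoc)
  also have "\<dots> = (a * e) * b" using assms(2) by (simp add: mult.assoc)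
  also have "\<dots> = e * (a * b)" using assms(1) by (simp add: mult.assoc)
  finally show ?thesis .
qed

lemma lift_idem:
  assumes sa: "right_semi_artinian TYPE('a::ring_1)" and ej: "(e::'a) * e - e \<in> jacobson_radical TYPE('a)"
  shows "\<exists>f. f * f = f \<and> f - e \<in> jacobson_radical TYPE('a)"
proof -
  let ?J = "jacobson_radical TYPE('a)"
  define xs where "xs n = (hh ^^ n) e" for n
  define j where "j = e * e - e"
  have jJ: "j \<in> ?J" using ej j_def by simp
  obtain k where k: "j ^ k = 0" using J_nil[OF sa jJ] by blast
  have xsS: "xs (Suc n) = ev [0,0,3,-2] (xs n)" for n unfolding xs_def hh_def by simp
  have C: "xs n * e = e * xs n" for n
  proof (induction n)
    case 0 then show ?case by (simp add: xs_def)
  next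
    case (Suc n) then show ?case unfolding xsS by (intro ev_comm) simp
  qed
  have jev: "j = ev [0,-1,1] e" by (simp only: ev_sq j_def)
  have jC: "q * j = j * q" if "q * e = e * q" for q
    unfolding jev by (rule ev_comm[OF that, symmetric])
  have jeC: "j ^ m * e = e * j ^ m" for m
    by (rule power_commuting_commutes) (use jC[of e] in simp)
  have jqC: "j ^ m * q = q * j ^ m" if "q * e = e * q" for q m
    by (rule power_commuting_commutes) (use jC[OF that] in simp)
  have main: "xs n - e \<in> ?J \<and> (\<exists>q. q * e = e * q \<and> ev [0,-1,1] (xs n) = j ^ Suc n * q)" for n
  proof (induction n)
    case 0 then show ?case using J_zero by (intro conjI exI[of _ 1]) (simp_all add: xs_def jev)
  next
    case (Suc n)
    then obtain q where q: "q * e = e * q" "ev [0,-1,1] (xs n) = j ^ Suc n * q" by blast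
    let ?d = "ev [0,-1,1] (xs n)"
    have dJ: "?d \<in> ?J" using q(2) J_mult[OF jJ, of "j ^ n * q"] by (simp add: mult.assoc)
    have eq: "xs (Suc n) - e = ev [1,-2] (xs n) * ?d + (xs n - e)"
      using hh1[of "xs n"] unfolding xsS hh_def[symmetric] by (simp add: algebra_simps)
    have 1: "xs (Suc n) - e \<in> ?J" unfolding eq by (rule J_add[OF J_left[OF dJ] conjunct1[OF Suc]])
    let ?c = "ev [-3,-4,4] (xs n)"
    have cC: "?c * e = e * ?c" by (rule ev_comm) (use C[of n] in simp)
    have "ev [0,-1,1] (xs (Suc n)) = ?d * ?d * ?c"
      using hh2[of "xs n"] unfolding xsS hh_def by simp
    also have "\<dots> = j ^ Suc n * (q * j ^ Suc n) * q * ?c" using q(2) by (simp add: mult.assoc)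
    also have "\<dots> = j ^ Suc n * (j ^ Suc n * q) * q * ?c" by (simp only: jqC[OF q(1), of "Suc n", symmetric])
    also have "\<dots> = (j ^ Suc n * j ^ Suc n) * q * q * ?c" by (simp only: mult.assoc)
    also have "j ^ Suc n * j ^ Suc n = j ^ Suc (Suc n) * j ^ n"
    proof -
      have "j ^ Suc n * j ^ Suc n = j ^ (Suc n + Suc n)" by (rule power_add[symmetric])
      also have "\<dots> = j ^ (Suc (Suc n) + n)" by simp
      also have "\<dots> = j ^ Suc (Suc n) * j ^ n" by (rule power_add)
      finally show ?thesis .
    qed
    also have "j ^ Suc (Suc n) * j ^ n * q * q * ?c = j ^ Suc (Suc n) * (j ^ n * q * q * ?c)"
      by (simp only: mult.assoc)
    finally have 2: "ev [0,-1,1] (xs (Suc n)) = j ^ Suc (Suc n) * (j ^ n * q * q * ?c)" .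
    have 3: "(j ^ n * q * q * ?c) * e = e * (j ^ n * q * q * ?c)"
      using comm_mult[OF comm_mult[OF comm_mult[OF jeC q(1)] q(1)] cC] .
    show ?case using 1 2 3 by blast
  qed
  obtain q where q: "ev [0,-1,1] (xs k) = j ^ Suc k * q" using main by blast
  have "j ^ Suc k = 0" using k by (simp add: power_Suc2)
  then have "ev [0,-1,1] (xs k) = 0" using q by simp
  then have "xs k * xs k - xs k = 0" by (simp only: ev_sq)
  then have "xs k * xs k = xs k" by (simp only: right_minus_eq)
  then show ?thesis using main[of k] by blast
qed



lemma mo_mid: "minover K L \<Longrightarrow> right_ideal X \<Longrightarrow> K \<subseteq> X \<Longrightarrow> X \<subseteq> L \<Longrightarrow> X = K \<or> X = L"
  unfolding minover_def by blast

lemma LL_J: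
  assumes L: "right_ideal L" and LL: "\<And>a b. a \<in> L \<Longrightarrow> b \<in> L \<Longrightarrow> a * b \<in> jacobson_radical TYPE('a::ring_1)"
    and l: "(l::'a) \<in> L"
  shows "l \<in> jacobson_radical TYPE('a)"
proof (rule J_mem)
  fix M :: "'a set" assume M: "maximal_right_ideal M"
  show "l \<in> M"
  proof (rule ccontr)
    assume "l \<notin> M"
    then obtain m r where mr: "m \<in> M" "m + l * r = 1" using max_ext[OF M] by blast
    have "l = (m + l * r) * l" using mr by simp
    also have "\<dots> = m * l + (l * r) * l" by (simp add: distrib_right)
    finally have eq: "l = m * l + (l * r) * l" .
    have "m * l \<in> M" using ri_mult[OF max_ri[OF M] mr(1)] by blast
    moreover have "(l * r) * l \<in> M" using J_memD[OF LL[OF ri_mult[OF L l] l] M] .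
    ultimately have "l \<in> M" using ri_add[OF max_ri[OF M]] eq by metis
    then show False using \<open>l \<notin> M\<close> by simp
  qed
qed

lemma ri_inter: "right_ideal A \<Longrightarrow> right_ideal B \<Longrightarrow> right_ideal (A \<inter> B)"
  unfolding right_ideal_def by blast

lemma reduced_J:
  assumes ce: "centrally_essential TYPE('a::ring_1)" and sa: "right_semi_artinian TYPE('a)"
    and nn: "(n::'a) * n \<in> jacobson_radical TYPE('a)"
  shows "n \<in> jacobson_radical TYPE('a)"
proof (rule ccontr)
  let ?J = "jacobson_radical TYPE('a)"
  assume nJ: "n \<notin> ?J"
  let ?I = "{a. n * a \<in> ?J}"
  have Iri: "right_ideal ?I" by (rule ri_colon[OF J_ri])
  have "?I \<noteq> UNIV"
  proof
    assume "?I = UNIV"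
    then have "n * 1 \<in> ?J" by blast
    then show False using nJ by simp
  qed
  then obtain L where L: "minover ?I L" using sa_minover[OF sa Iri] by blast
  have Lri: "right_ideal L" and IL: "?I \<subset> L" using L unfolding minover_def by auto
  define L' where "L' = {k + n*a |k a. k \<in> ?J \<and> a \<in> L}"
  have L'ri: "right_ideal L'" unfolding L'_def by (rule ri_sum[OF J_ri Lri])
  have JL': "?J \<subseteq> L'"
  proof
    fix x assume "x \<in> ?J"
    then show "x \<in> L'" unfolding L'_def using ri_zero[OF Lri] by (intro CollectI exI[of _ x] exI[of _ 0]) simp
  qed
  obtain l0 where l0: "l0 \<in> L" "n * l0 \<notin> ?J" using IL by blast
  have nl0: "n * l0 \<in> L'" unfolding L'_def using J_zero l0 by (intro CollectI exI[of _ 0] exI[of _ l0]) simp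
  have mo: "minover ?J L'"
    unfolding minover_def
  proof (intro conjI allI impI)
    show "right_ideal L'" by (rule L'ri)
    show "?J \<subset> L'" using JL' nl0 l0 by blast
    fix X assume X: "right_ideal X \<and> ?J \<subseteq> X \<and> X \<subseteq> L'"
    let ?Y = "L \<inter> {a. n * a \<in> X}"
    have Yri: "right_ideal ?Y" using ri_inter[OF Lri ri_colon[of X n]] X by blast
    have "?I \<subseteq> ?Y" using IL X by blast
    then have "?Y = ?I \<or> ?Y = L" using mo_mid[OF L Yri] by blast
    then show "X = ?J \<or> X = L'"
    proof
      assume Y: "?Y = ?I"
      have "X \<subseteq> ?J"
      proof
        fix x assume x: "x \<in> X"
        then obtain k a where ka: "x = k + n * a" "k \<in> ?J" "a \<in> L" using X unfolding L'_def by blast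
        have "n * a = x - k" using ka by simp
        then have "n * a \<in> X" using ri_diff[of X x k] X x ka by auto
        then have "a \<in> ?Y" using ka by blast
        then have "n * a \<in> ?J" using Y by blast
        then show "x \<in> ?J" using ka J_add by simp
      qed
      then show ?thesis using X by blast
    next
      assume Y: "?Y = L"
      have "L' \<subseteq> X"
      proof
        fix x assume "x \<in> L'"
        then obtain k a where ka: "x = k + n * a" "k \<in> ?J" "a \<in> L" unfolding L'_def by blast
        then have "n * a \<in> X" using Y by blast
        then show "x \<in> X" using ka X ri_add[of X k "n*a"] by blast
      qed
      then show ?thesis using X by blast
    qed
  qed
  have "\<not> (\<forall>a\<in>L'. \<forall>b\<in>L'. a * b \<in> ?J)"
  proof
    assume "\<forall>a\<in>L'. \<forall>b\<in>L'. a * b \<in> ?J"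
    then have "n * l0 \<in> ?J" using LL_J[OF L'ri] nl0 by blast
    then show False using l0 by simp
  qed
  then obtain a b where ab: "a \<in> L'" "b \<in> L'" "a * b \<notin> ?J" by blast
  define X1 where "X1 = {k + a*l |k l. k \<in> ?J \<and> l \<in> L'}"
  have X1ri: "right_ideal X1" unfolding X1_def by (rule ri_sum[OF J_ri L'ri])
  have "?J \<subseteq> X1"
  proof
    fix x assume "x \<in> ?J"
    then show "x \<in> X1" unfolding X1_def using ri_zero[OF L'ri] by (intro CollectI exI[of _ x] exI[of _ 0]) simp
  qed
  moreover have "X1 \<subseteq> L'"
  proof
    fix x assume "x \<in> X1"
    then obtain k l where "x = k + a * l" "k \<in> ?J" "l \<in> L'" unfolding X1_def by blast
    then show "x \<in> L'" using JL' ri_mult[OF L'ri ab(1)] ri_add[OF L'ri] by blast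
  qed
  moreover have "a * b \<in> X1" unfolding X1_def using J_zero ab by (intro CollectI exI[of _ 0] exI[of _ b]) simp
  ultimately have "X1 = L'" using mo_mid[OF mo X1ri] ab by blast
  then obtain j0 e where je: "a = j0 + a * e" "j0 \<in> ?J" "e \<in> L'" using ab(1) unfolding X1_def by blast
  let ?Y1 = "L' \<inter> {x. a * x \<in> ?J}"
  have Y1ri: "right_ideal ?Y1" by (rule ri_inter[OF L'ri ri_colon[OF J_ri]])
  have "?J \<subseteq> ?Y1" using JL' J_left by blast
  then have "?Y1 = ?J \<or> ?Y1 = L'" using mo_mid[OF mo Y1ri] by blast
  moreover have "?Y1 \<noteq> L'" using ab by blast
  ultimately have Y1: "?Y1 = ?J" by blast
  have "a * (e * e - e) = - (j0 * e)"
  proof -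
    have "a - j0 = a * e" using je(1) by (metis add_diff_cancel_left')
    then have ae: "a * e = a - j0" by simp
    have "a * (e * e - e) = (a * e) * e - a * e" by (simp add: algebra_simps)
    also have "\<dots> = (a - j0) * e - (a - j0)" unfolding ae ..
    also have "\<dots> = a * e - j0 * e - (a - j0)" by (simp add: algebra_simps)
    also have "\<dots> = - (j0 * e)" unfolding ae by (simp add: algebra_simps)
    finally show ?thesis .
  qed
  then have "a * (e * e - e) \<in> ?J" using J_neg[OF J_mult[OF je(2)]] by simp
  moreover have "e * e - e \<in> L'" using ri_diff[OF L'ri ri_mult[OF L'ri je(3)] je(3)] .
  ultimately have eJ: "e * e - e \<in> ?J" using Y1 by blast
  have enJ: "e \<notin> ?J"
  proof
    assume "e \<in> ?J"
    then have "a \<in> ?J" using je J_add J_left by metis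
    then show False using ab J_mult by blast
  qed
  obtain f where f: "f * f = f" "f - e \<in> ?J" using lift_idem[OF sa eJ] by blast
  have cen: "f * x = x * f" for x using idem_central[OF ce f(1)] .
  have "f - e \<in> L'" using JL' f(2) by blast
  then have "e + (f - e) \<in> L'" using ri_add[OF L'ri je(3)] by blast
  then have fL: "f \<in> L'" by simp
  have fnJ: "f \<notin> ?J"
  proof
    assume "f \<in> ?J"
    then have "f - (f - e) \<in> ?J" using J_diff f(2) by blast
    then show False using enJ by simp
  qed
  obtain j1 c1 where jc: "f = j1 + n * c1" "j1 \<in> ?J" using fL unfolding L'_def by blast
  define X2 where "X2 = {k + (f*n)*d |k d. k \<in> ?J \<and> d \<in> (UNIV::'a set)}"
  have X2ri: "right_ideal X2" unfolding X2_def by (rule ri_sum[OF J_ri ri_UNIV])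
  have "?J \<subseteq> X2"
  proof
    fix x assume "x \<in> ?J"
    then show "x \<in> X2" unfolding X2_def by (intro CollectI exI[of _ x] exI[of _ 0]) simp
  qed
  moreover have "X2 \<subseteq> L'"
  proof
    fix x assume "x \<in> X2"
    then obtain k d where "x = k + f * n * d" "k \<in> ?J" unfolding X2_def by blast
    then show "x \<in> L'" using JL' ri_mult[OF L'ri ri_mult[OF L'ri fL]] ri_add[OF L'ri] by blast
  qed
  ultimately have "X2 = ?J \<or> X2 = L'" using mo_mid[OF mo X2ri] by blast
  then show False
  proof
    assume "X2 = ?J"
    moreover have "f * n \<in> X2" unfolding X2_def using J_zero by (intro CollectI exI[of _ 0] exI[of _ 1]) simp
    ultimately have fn: "f * n \<in> ?J" by blast
    have "f = f * f" using f by simp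
    also have "\<dots> = f * j1 + (f * n) * c1" using jc by (simp add: distrib_left mult.assoc)
    finally have "f = f * j1 + (f * n) * c1" .
    moreover have "f * j1 \<in> ?J" using J_left[OF jc(2)] .
    moreover have "(f * n) * c1 \<in> ?J" using J_mult[OF fn] .
    ultimately have "f \<in> ?J" using J_add by metis
    then show False using fnJ by simp
  next
    assume X2: "X2 = L'"
    then obtain k d where kd: "f = k + f * n * d" "k \<in> ?J" using fL unfolding X2_def by blast
    have "n * f = n * k + n * (f * n) * d" using kd(1) by (metis distrib_left mult.assoc)
    also have "n * (f * n) = (n * n) * f" using cen[of n] by (simp add: mult.assoc)
    finally have "n * f = n * k + (n * n) * f * d" .
    moreover have "n * k \<in> ?J" using J_left[OF kd(2)] .
    moreover have "(n * n) * f * d \<in> ?J" using J_mult[OF J_mult[OF nn]] .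
    ultimately have "n * f \<in> ?J" using J_add by metis
    then have fn: "f * n \<in> ?J" using cen[of n] by simp
    have "X2 \<subseteq> ?J"
    proof
      fix x assume "x \<in> X2"
      then obtain k d where "x = k + f * n * d" "k \<in> ?J" unfolding X2_def by blast
      then show "x \<in> ?J" using J_add J_mult[OF fn] by blast
    qed
    then have "f \<in> ?J" using X2 fL by blast
    then show False using fnJ by simp
  qed
qed



lemma J_rev:
  assumes ce: "centrally_essential TYPE('a::ring_1)" and sa: "right_semi_artinian TYPE('a)"
    and xy: "(x::'a) * y \<in> jacobson_radical TYPE('a)"
  shows "y * x \<in> jacobson_radical TYPE('a)"
proof (rule reduced_J[OF ce sa])
  have "(y * x) * (y * x) = (y * (x * y)) * x" by (simp add: mult.assoc)
  then show "(y * x) * (y * x) \<in> jacobson_radical TYPE('a)" using J_mult[OF J_left[OF xy]] by simp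
qed

lemma J_ifp:
  assumes ce: "centrally_essential TYPE('a::ring_1)" and sa: "right_semi_artinian TYPE('a)"
    and xy: "(x::'a) * y \<in> jacobson_radical TYPE('a)"
  shows "x * r * y \<in> jacobson_radical TYPE('a)"
proof (rule reduced_J[OF ce sa])
  have yx: "y * x \<in> jacobson_radical TYPE('a)" by (rule J_rev[OF ce sa xy])
  have "(x * r * y) * (x * r * y) = ((x * r) * (y * x)) * (r * y)" by (simp add: mult.assoc)
  then show "(x * r * y) * (x * r * y) \<in> jacobson_radical TYPE('a)" using J_mult[OF J_left[OF yx]] by simp
qed

lemma sa_case:
  assumes ce: "centrally_essential TYPE('a::ring_1)" and sa: "right_semi_artinian TYPE('a)"
    and M: "maximal_right_ideal (M::'a set)"
  shows "two_sided_ideal M"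
proof -
  let ?J = "jacobson_radical TYPE('a)"
  have Mri: "right_ideal M" using M max_ri by blast
  have oneM: "1 \<notin> M" using max_ne[OF M] .
  define P where "P = {a. \<forall>r. r * a \<in> M}"
  have JP: "?J \<subseteq> P" unfolding P_def using J_left J_memD[OF _ M] by blast
  have PM: "P \<subseteq> M" unfolding P_def by (metis (mono_tags, lifting) mem_Collect_eq mult_1 subsetI)
  have oneP: "1 \<notin> P" using PM oneM by blast
  have Pri: "right_ideal P" unfolding P_def right_ideal_def
  proof (intro conjI ballI allI)
    show "0 \<in> {a. \<forall>r. r * a \<in> M}" using ri_zero[OF Mri] by simp
  next
    fix x y assume "x \<in> {a. \<forall>r. r * a \<in> M}" "y \<in> {a. \<forall>r. r * a \<in> M}"
    then show "x + y \<in> {a. \<forall>r. r * a \<in> M}" using ri_add[OF Mri] by (simp add: distrib_left)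
  next
    fix x assume "x \<in> {a. \<forall>r. r * a \<in> M}"
    then show "- x \<in> {a. \<forall>r. r * a \<in> M}" using ri_neg[OF Mri] by simp
  next
    fix x c assume x: "x \<in> {a. \<forall>r. r * a \<in> M}"
    show "x * c \<in> {a. \<forall>r. r * a \<in> M}"
    proof (intro CollectI allI)
      fix r have "r * x \<in> M" using x by simp
      then have "(r * x) * c \<in> M" using ri_mult[OF Mri] by blast
      then show "r * (x * c) \<in> M" by (simp add: mult.assoc)
    qed
  qed
  have Pleft: "s * a \<in> P" if "a \<in> P" for s a
    using that unfolding P_def by (simp add: mult.assoc[symmetric])
  have prime: "\<exists>c. a * c * b \<notin> P" if a: "a \<notin> P" and b: "b \<notin> P" for a b
  proof -
    obtain r0 where r0: "r0 * b \<notin> M" using b unfolding P_def by blast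
    obtain r1 where r1: "r1 * a \<notin> M" using a unfolding P_def by blast
    obtain m s where ms: "m \<in> M" "m + (r1 * a) * s = 1" using max_ext[OF M r1] by blast
    have "r0 * b = (m + (r1 * a) * s) * r0 * b" using ms by simp
    also have "\<dots> = m * (r0 * b) + r1 * (a * (s * r0) * b)" by (simp add: algebra_simps)
    finally have eq: "r0 * b = m * (r0 * b) + r1 * (a * (s * r0) * b)" .
    have "r1 * (a * (s * r0) * b) \<notin> M"
    proof
      assume "r1 * (a * (s * r0) * b) \<in> M"
      then have "r0 * b \<in> M" using eq ri_add[OF Mri ri_mult[OF Mri ms(1)]] by metis
      then show False using r0 by simp
    qed
    then show ?thesis unfolding P_def by blast
  qed
  have primeP: "a \<in> P \<or> b \<in> P" if "\<And>c. a * c * b \<in> P" for a b using prime that by blast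
  define p where "p = {b. \<exists>s. s \<notin> P \<and> b * s \<in> ?J}"
  have Jp: "?J \<subseteq> p" unfolding p_def using oneP by force
  have pri: "right_ideal p" unfolding right_ideal_def
  proof (intro conjI ballI allI)
    show "0 \<in> p" using Jp J_zero by blast
  next
    fix x y assume xy: "x \<in> p" "y \<in> p"
    then obtain s t where st: "s \<notin> P" "x * s \<in> ?J" "t \<notin> P" "y * t \<in> ?J" unfolding p_def by blast
    obtain c where c: "s * c * t \<notin> P" using prime[OF st(1) st(3)] by blast
    have "x * (s * c * t) \<in> ?J" using J_mult[OF st(2), of "c * t"] by (simp add: mult.assoc)
    moreover have "y * (s * c * t) \<in> ?J" using J_ifp[OF ce sa st(4), of "s * c"] by (simp add: mult.assoc)
    ultimately have "(x + y) * (s * c * t) \<in> ?J" using J_add by (simp add: distrib_right)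
    then show "x + y \<in> p" unfolding p_def using c by blast
  next
    fix x assume x: "x \<in> p"
    obtain s where s: "s \<notin> P" "x * s \<in> ?J" using x unfolding p_def by blast
    have "(- x) * s \<in> ?J" using J_neg[OF s(2)] by simp
    then show "- x \<in> p" unfolding p_def using s(1) by blast
  next
    fix x r assume "x \<in> p"
    then obtain s where s: "s \<notin> P" "x * s \<in> ?J" unfolding p_def by blast
    then have "x * r * s \<in> ?J" using J_ifp[OF ce sa] by blast
    then show "x * r \<in> p" unfolding p_def using s by blast
  qed
  have pleft: "r * x \<in> p" if x: "x \<in> p" for r x
  proof -
    obtain s where s: "s \<notin> P" "x * s \<in> ?J" using x unfolding p_def by blast
    then have "(r * x) * s \<in> ?J" using J_left[OF s(2)] by (simp add: mult.assoc)
    then show ?thesis unfolding p_def using s by blast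
  qed
  have pP: "p \<subseteq> P"
  proof
    fix b assume "b \<in> p"
    then obtain s where s: "s \<notin> P" "b * s \<in> ?J" unfolding p_def by blast
    have "b * c * s \<in> P" for c using J_ifp[OF ce sa s(2)] JP by blast
    then show "b \<in> P" using primeP s(1) by blast
  qed
  have rcp: "b \<in> p" if a: "a \<notin> P" and ab: "a * b \<in> p" for a b
  proof -
    obtain s where s: "s \<notin> P" "a * b * s \<in> ?J" using ab unfolding p_def by blast
    have "(b * s) * a \<in> ?J" using J_rev[OF ce sa, of a "b * s"] s(2) by (simp add: mult.assoc)
    then have "b * s * c * a \<in> ?J" for c using J_ifp[OF ce sa] by blast
    obtain c where c: "s * c * a \<notin> P" using prime[OF s(1) a] by blast
    have "b * (s * c * a) \<in> ?J" using \<open>\<And>c. b * s * c * a \<in> ?J\<close>[of c] by (simp add: mult.assoc)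
    then show ?thesis unfolding p_def using c by blast
  qed
  have sq: "u * u \<notin> p" if "u \<notin> p" for u
  proof
    assume "u * u \<in> p"
    then obtain s where s: "s \<notin> P" "u * u * s \<in> ?J" unfolding p_def by blast
    have "u * (u * s) \<in> ?J" using s(2) by (simp add: mult.assoc)
    then have "(u * s) * u \<in> ?J" by (rule J_rev[OF ce sa])
    then have "(u * s) * u * s \<in> ?J" using J_mult by blast
    then have "(u * s) * (u * s) \<in> ?J" by (simp add: mult.assoc)
    then have "u * s \<in> ?J" by (rule reduced_J[OF ce sa])
    then show False using that s(1) unfolding p_def by blast
  qed
  have onep: "1 \<notin> p" using pP oneP by blast
  have "p \<noteq> UNIV" using onep by blast
  then obtain L where L: "minover p L" using sa_minover[OF sa pri] by blast
  have Lri: "right_ideal L" and pL: "p \<subset> L" using L unfolding minover_def by auto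
  obtain u where u: "u \<in> L" "u \<notin> p" using pL by blast
  define Y where "Y = {k + (u*u)*c |k c. k \<in> p \<and> c \<in> (UNIV::'a set)}"
  have Yri: "right_ideal Y" unfolding Y_def by (rule ri_sum[OF pri ri_UNIV])
  have "p \<subseteq> Y"
  proof
    fix x assume "x \<in> p" then show "x \<in> Y" unfolding Y_def by (intro CollectI exI[of _ x] exI[of _ 0]) simp
  qed
  moreover have "Y \<subseteq> L"
  proof
    fix x assume "x \<in> Y"
    then obtain k c where "x = k + u * u * c" "k \<in> p" unfolding Y_def by blast
    then show "x \<in> L" using pL ri_mult[OF Lri ri_mult[OF Lri u(1)]] ri_add[OF Lri] by blast
  qed
  moreover have "u * u \<in> Y" unfolding Y_def using ri_zero[OF pri] by (intro CollectI exI[of _ 0] exI[of _ 1]) simp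
  ultimately have "Y = L" using mo_mid[OF L Yri] sq[OF u(2)] by blast
  then obtain q c where qc: "u = q + u * u * c" "q \<in> p" using u(1) unfolding Y_def by blast
  define w where "w = 1 - u * c"
  have uw: "u * w = q"
  proof -
    have "u - u * u * c = q" using qc(1) by (metis add_diff_cancel_right')
    then show ?thesis unfolding w_def by (simp add: algebra_simps mult.assoc)
  qed
  have wp: "w \<in> p"
  proof (cases "u \<in> P")
    case False then show ?thesis using rcp uw qc(2) by blast
  next
    case True
    have "w \<notin> P"
    proof
      assume "w \<in> P"
      moreover have "u * c \<in> P" using ri_mult[OF Pri True] .
      ultimately have "w + u * c \<in> P" using ri_add[OF Pri] by blast
      then show False using oneP unfolding w_def by simp
    qed
    show ?thesis
    proof (rule ccontr)
      assume "w \<notin> p"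
      obtain s where s: "s \<notin> P" "u * w * s \<in> ?J" using qc(2) uw unfolding p_def by blast
      have "w * (s * u) \<in> ?J" using J_rev[OF ce sa, of u "w * s"] s(2) by (simp add: mult.assoc)
      then have "w * (s * u) \<in> p" using Jp by blast
      then have "s * u \<in> p" using rcp \<open>w \<notin> P\<close> by blast
      then have "u \<in> p" using rcp s(1) by blast
      then show False using u by simp
    qed
  qed
  have "1 \<in> L"
  proof -
    have "w \<in> L" using wp pL by blast
    moreover have "u * c \<in> L" using ri_mult[OF Lri u(1)] .
    ultimately have "w + u * c \<in> L" using ri_add[OF Lri] by blast
    then show ?thesis unfolding w_def by simp
  qed
  then have "L = UNIV" using ri_one[OF Lri] by blast
  then have "M = p \<or> M = UNIV" using mo_mid[OF L Mri] pP PM by blast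
  then have Mp: "M = p" using oneM by blast
  show ?thesis unfolding two_sided_ideal_def left_ideal_def
    using Mri pleft Mp unfolding right_ideal_def by blast
qed


theorem mainTheorem2:
  assumes "centrally_essential TYPE('a::ring_1)"
    and "right_semi_artinian TYPE('a) \<or> semiperfect TYPE('a)"
  shows "right_quasi_invariant TYPE('a)"
  unfolding right_quasi_invariant_def
  using assms sa_case semiperfect_case by blast

end
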